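(* Let $(\mathcal S,\mathcal Q,\Theta)$ be a Pufferfish scenario and $(\mathcal U,\omega)$ a slice profile in $\mathbb R^d$. Let $f:\mathcal X\to\mathbb R^d$ be a query, let $\zeta$ be a probability distribution on $\mathbb R^d$, and let $\mathcal M(X)=f(X)+N$ with $N\sim\zeta$ independent of $X$. Then for any $\theta\in\Theta$, any $(s_i,s_j)\in\mathcal Q$ with $P^S_\theta(s_i)>0$ and $P^S_\theta(s_j)>0$, all $\alpha>1$ and all $u\in\mathcal U$, \[ \mathtt D_\alpha\!\left(\Psi^u_\#\mathcal M^\theta_{s_i}\,\big\|\,\Psi^u_\#\mathcal M^\theta_{s_j}\right)\le R_\alpha\!\left(\zeta,\ z^u_\infty(\theta,s_i,s_j)\right), \] where $z^u_\infty(\theta,s_i,s_j):=W_\infty\!\left(\Psi^u_\# P^{f,s_i}_\theta,\ \Psi^u_\# P^{f,s_j}_\theta\right)$.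
   Context: A Pufferfish scenario $(\mathcal S,\mathcal Q,\Theta)$ consists of a set of secrets $\mathcal S$, a set of secret pairs $\mathcal Q\subseteq\mathcal S\times\mathcal S$, and a family $\Theta$ of priors; each $\theta\in\Theta$ is a joint distribution $P_\theta$ of a secret $S\in\mathcal S$ and a dataset $X\in\mathcal X$, with secret marginal $P^S_\theta$. For a query $f$, $P^{f,s}_\theta$ denotes the conditional law of $f(X)$ given $S=s$ under $\theta$. For a mechanism $\mathcal M$, $\mathcal M^\theta_s$ denotes the law of $\mathcal M(X)$ given $S=s$ under $\theta$ (here $\mathcal M^\theta_s=P^{f,s}_\theta*\zeta$). A slice profile $(\mathcal U,\omega)$ consists of a set $\mathcal U\subseteq\mathbb S^{d-1}=\{u\in\mathbb R^d:\|u\|_2=1\}$ and a probability measure $\omega$ on $\mathbb S^{d-1}$ supported on $\mathcal U$. For $u\in\mathbb S^{d-1}$, $\Psi^u(a)=\langle a,u\rangle$ and $\Psi^u_\#P$ is the pushforward $P\circ(\Psi^u)^{-1}$. The R\'enyi divergence of order $\alpha>1$ is $\mathtt D_\alpha(P\|Q)=\frac{1}{\alpha-1}\log\mathbb E_{Z\sim Q}[(\frac{dP}{dQ}(Z))^\alpha]$ (and $+\infty$ if $P\not\ll Q$). For probability measures $\nu,\mu$ on $\mathbb R$, $W_\infty(\nu,\mu)=\inf_{\pi}\sup_{(x,y)\in\mathrm{supp}(\pi)}|x-y|$, the infimum over couplings $\pi$ of $(\nu,\mu)$. For $a\in\mathbb R^d$, $\zeta_{-a}$ denotes the law of $U-a$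 with $U\sim\zeta$. The per-slice R\'enyi envelope is $R_\alpha(\zeta,r):=\sup_{a\in\mathbb R^d,\ \|a\|_2\le r}\mathtt D_\alpha(\zeta_{-a}\,\|\,\zeta)$ for $r\ge0$. *)

theory Defs
  imports "HOL-Probability.Probability"
begin

definition renyi_div :: "real \<Rightarrow> 'a measure \<Rightarrow> 'a measure \<Rightarrow> ereal" where
  "renyi_div \<alpha> P Q =
     (if sets P = sets Q \<and> absolutely_continuous Q P then
        (let I = (\<integral>\<^sup>+ x. ennreal ((enn2real (RN_deriv Q P x)) powr \<alpha>) \<partial>Q)
         in if I = \<infinity> then \<infinity> else ereal (ln (enn2real I) / (\<alpha> - 1)))
      else \<infinity>)"

definition msupport :: "'a::topological_space measure \<Rightarrow> 'a set" where
  "msupport M = {x. \<forall>U. open U \<and> x \<in> U \<longrightarrow> emeasure M U > 0}"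

definition couplings :: "real measure \<Rightarrow> real measure \<Rightarrow> (real \<times> real) measure set" where
  "couplings \<nu> \<mu> = {\<pi>. prob_space \<pi> \<and> sets \<pi> = sets (borel :: (real \<times> real) measure)
        \<and> distr \<pi> borel fst = \<nu> \<and> distr \<pi> borel snd = \<mu>}"

definition W_inf :: "real measure \<Rightarrow> real measure \<Rightarrow> ereal" where
  "W_inf \<nu> \<mu> = (INF \<pi>\<in>couplings \<nu> \<mu>. SUP p\<in>msupport \<pi>. ereal \<bar>fst p - snd p\<bar>)"

definition slice :: "'a::euclidean_space \<Rightarrow> 'a measure \<Rightarrow> real measure" where
  "slice u P = distr P borel (\<lambda>a. a \<bullet> u)"

definition shift_meas :: "'a::euclidean_space measure \<Rightarrow> 'a \<Rightarrow> 'a measure" where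
  "shift_meas \<zeta> a = distr \<zeta> borel (\<lambda>x. x - a)"

definition renyi_env :: "real \<Rightarrow> 'a::euclidean_space measure \<Rightarrow> ereal \<Rightarrow> ereal" where
  "renyi_env \<alpha> \<zeta> r = (SUP a\<in>{a. ereal (norm a) \<le> r}. renyi_div \<alpha> (shift_meas \<zeta> a) \<zeta>)"

text \<open>Pufferfish scenario: secrets Sset, secret pairs Q, priors Theta; each prior is a joint
  probability distribution of (S, X) on 's x 'x with S taking values in Sset.\<close>
definition pufferfish_scenario ::
  "'x measure \<Rightarrow> 's set \<Rightarrow> ('s \<times> 's) set \<Rightarrow> ('s \<times> 'x) measure set \<Rightarrow> bool" where
  "pufferfish_scenario SX Sset Q \<Theta> \<longleftrightarrow> Q \<subseteq> Sset \<times> Sset \<and>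
     (\<forall>\<theta>\<in>\<Theta>. prob_space \<theta> \<and> sets \<theta> = sets (count_space UNIV \<Otimes>\<^sub>M SX)
        \<and> emeasure \<theta> (Sset \<times> space SX) = 1)"

definition slice_profile :: "'a::euclidean_space set \<Rightarrow> 'a measure \<Rightarrow> bool" where
  "slice_profile U \<omega> \<longleftrightarrow> U \<subseteq> sphere 0 1 \<and> prob_space \<omega> \<and> sets \<omega> = sets borel
     \<and> (\<exists>A\<in>sets borel. A \<subseteq> U \<and> emeasure \<omega> A = 1)"

definition secret_prob :: "('s \<times> 'x) measure \<Rightarrow> 'x measure \<Rightarrow> 's \<Rightarrow> real" where
  "secret_prob \<theta> SX s = measure \<theta> ({s} \<times> space SX)"

definition cond_query_law ::
  "('s \<times> 'x) measure \<Rightarrow> 'x measure \<Rightarrow> ('x \<Rightarrow> 'a::euclidean_space) \<Rightarrow> 's \<Rightarrow> 'a measure" where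
  "cond_query_law \<theta> SX f s = distr (uniform_measure \<theta> ({s} \<times> space SX)) borel (\<lambda>p. f (snd p))"

text \<open>M^theta_s: conditional law of M(X) = f(X) + N given S = s, with N ~ zeta independent of (S,X).\<close>
definition mech_law ::
  "('s \<times> 'x) measure \<Rightarrow> 'x measure \<Rightarrow> ('x \<Rightarrow> 'a::euclidean_space) \<Rightarrow> 'a measure \<Rightarrow> 's \<Rightarrow> 'a measure" where
  "mech_law \<theta> SX f \<zeta> s =
     distr (uniform_measure \<theta> ({s} \<times> space SX) \<Otimes>\<^sub>M \<zeta>) borel (\<lambda>(p, n). f (snd p) + n)"

end

theory Submission
  imports Defs
begin

lemma msupport_AE:
  fixes \<pi> :: "('b::second_countable_topology) measure"
  assumes s: "sets \<pi> = sets borel"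
  shows "AE p in \<pi>. p \<in> msupport \<pi>"
proof -
  define F where "F = {U. open U \<and> emeasure \<pi> U = 0}"
  obtain F' where F': "F' \<subseteq> F" "countable F'" "\<Union>F' = \<Union>F"
    using Lindelof[of F] unfolding F_def by blast
  have "\<Union>F' \<in> null_sets \<pi>"
  proof -
    have "(\<Union>U\<in>F'. U) \<in> null_sets \<pi>"
      using F'(1,2) by (intro null_sets_UN') (auto simp: F_def null_sets_def s)
    then show ?thesis by simp
  qed
  moreover have "{x \<in> space \<pi>. x \<notin> msupport \<pi>} \<subseteq> \<Union>F'"
    unfolding F'(3) by (auto simp: msupport_def F_def not_less)
  ultimately show ?thesis by (rule AE_I')
qed

lemma renyi_to_young:
  fixes P Q :: "'b measure"
  assumes P: "prob_space P" and Q: "prob_space Q" and a: "\<alpha> > 1"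
    and D: "renyi_div \<alpha> P Q \<le> ereal r"
    and g: "g \<in> borel_measurable Q" "\<And>x. 0 \<le> g x"
  shows "(\<integral>\<^sup>+x. ennreal (g x) \<partial>P) \<le> ennreal (exp ((\<alpha>-1)*r) / \<alpha>)
           + ennreal ((\<alpha>-1)/\<alpha>) * (\<integral>\<^sup>+x. ennreal (g x powr (\<alpha>/(\<alpha>-1))) \<partial>Q)"
proof -
  interpret P: prob_space P by fact
  interpret Q: prob_space Q by fact
  define I where "I = (\<integral>\<^sup>+ x. ennreal ((enn2real (RN_deriv Q P x)) powr \<alpha>) \<partial>Q)"
  define K where "K = exp ((\<alpha>-1)*r)"
  define \<rho> where "\<rho> x = enn2real (RN_deriv Q P x)" for x
  have sac: "sets P = sets Q \<and> absolutely_continuous Q P"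
    using D by (auto simp: renyi_div_def split: if_splits)
  have "I \<noteq> \<infinity>" and lnI: "ln (enn2real I) / (\<alpha> - 1) \<le> r"
    using D sac by (auto simp: renyi_div_def I_def Let_def split: if_splits)
  have Kpos: "K > 0" by (simp add: K_def)
  have "enn2real I \<le> K"
  proof (cases "enn2real I = 0")
    case True then show ?thesis using Kpos by simp
  next
    case False
    then have pos: "enn2real I > 0" by (simp add: enn2real_nonneg order_le_neq_trans)
    have "ln (enn2real I) \<le> (\<alpha>-1)*r" using lnI a by (simp add: divide_le_eq mult.commute)
    then have "exp (ln (enn2real I)) \<le> exp ((\<alpha>-1)*r)" by simp
    then show ?thesis using pos by (simp add: K_def)
  qed
  then have IK: "I \<le> ennreal K"
  proof -
    have "I = ennreal (enn2real I)" using \<open>I \<noteq> \<infinity>\<close> by (simp add: less_top)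
    also have "\<dots> \<le> ennreal K" using \<open>enn2real I \<le> K\<close> by (rule ennreal_leI)
    finally show ?thesis .
  qed
  have fin: "AE x in Q. RN_deriv Q P x \<noteq> \<infinity>"
    using sac by (intro Q.RN_deriv_finite) (auto intro: P.sigma_finite_measure)
  have "(\<integral>\<^sup>+x. ennreal (g x) \<partial>P) = (\<integral>\<^sup>+x. RN_deriv Q P x * ennreal (g x) \<partial>Q)"
    using sac g by (intro Q.RN_deriv_nn_integral) auto
  also have "\<dots> = (\<integral>\<^sup>+x. ennreal (\<rho> x * g x) \<partial>Q)"
    using fin by (intro nn_integral_cong_AE) (auto simp: \<rho>_def ennreal_mult' g less_top)
  also have "\<dots> \<le> (\<integral>\<^sup>+x. ennreal (1/\<alpha>) * ennreal (\<rho> x powr \<alpha>)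
        + ennreal ((\<alpha>-1)/\<alpha>) * ennreal (g x powr (\<alpha>/(\<alpha>-1))) \<partial>Q)"
  proof (intro nn_integral_mono)
    fix x
    have "\<rho> x * g x \<le> \<rho> x powr \<alpha> / \<alpha> + g x powr (\<alpha>/(\<alpha>-1)) / (\<alpha>/(\<alpha>-1))"
      using a g by (intro Youngs_inequality) (auto simp: \<rho>_def field_simps)
    also have "\<dots> = (1/\<alpha>) * \<rho> x powr \<alpha> + ((\<alpha>-1)/\<alpha>) * g x powr (\<alpha>/(\<alpha>-1))"
      using a by (simp add: field_simps)
    finally show "ennreal (\<rho> x * g x) \<le> ennreal (1/\<alpha>) * ennreal (\<rho> x powr \<alpha>)
        + ennreal ((\<alpha>-1)/\<alpha>) * ennreal (g x powr (\<alpha>/(\<alpha>-1)))"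
      using a by (simp add: ennreal_mult'[symmetric] ennreal_plus[symmetric] del: ennreal_plus)
  qed
  also have "\<dots> = ennreal (1/\<alpha>) * I + ennreal ((\<alpha>-1)/\<alpha>) * (\<integral>\<^sup>+x. ennreal (g x powr (\<alpha>/(\<alpha>-1))) \<partial>Q)"
    using g by (simp add: nn_integral_add nn_integral_cmult I_def \<rho>_def)
  also have "\<dots> \<le> ennreal (1/\<alpha>) * ennreal K + ennreal ((\<alpha>-1)/\<alpha>) * (\<integral>\<^sup>+x. ennreal (g x powr (\<alpha>/(\<alpha>-1))) \<partial>Q)"
    using IK by (intro add_mono mult_left_mono) auto
  also have "ennreal (1/\<alpha>) * ennreal K = ennreal (exp ((\<alpha>-1)*r) / \<alpha>)"
    using a Kpos by (simp add: ennreal_mult'[symmetric] K_def)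
  finally show ?thesis .
qed

lemma young_to_renyi:
  fixes P Q :: "'b measure"
  assumes P: "prob_space P" and Q: "prob_space Q" and a: "\<alpha> > 1" and sPQ: "sets P = sets Q"
    and H: "\<And>g. g \<in> borel_measurable Q \<Longrightarrow> (\<And>x. 0 \<le> g x) \<Longrightarrow>
       (\<integral>\<^sup>+x. ennreal (g x) \<partial>P) \<le> ennreal (exp ((\<alpha>-1)*r) / \<alpha>)
           + ennreal ((\<alpha>-1)/\<alpha>) * (\<integral>\<^sup>+x. ennreal (g x powr (\<alpha>/(\<alpha>-1))) \<partial>Q)"
  shows "renyi_div \<alpha> P Q \<le> ereal r"
proof -
  interpret P: prob_space P by fact
  interpret Q: prob_space Q by fact
  define K where "K = exp ((\<alpha>-1)*r)"
  have Kpos: "K > 0" by (simp add: K_def)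
  have r0: "0 \<le> r"
  proof -
    have "(\<integral>\<^sup>+x. ennreal 1 \<partial>P) \<le> ennreal (K / \<alpha>)
           + ennreal ((\<alpha>-1)/\<alpha>) * (\<integral>\<^sup>+x. ennreal (1 powr (\<alpha>/(\<alpha>-1))) \<partial>Q)"
      using H[of "\<lambda>x. 1"] by (simp add: K_def)
    then have "ennreal 1 \<le> ennreal (K / \<alpha>) + ennreal ((\<alpha>-1)/\<alpha>)"
      by (simp add: P.emeasure_space_1 Q.emeasure_space_1)
    also have "\<dots> = ennreal (K/\<alpha> + (\<alpha>-1)/\<alpha>)"
      using a Kpos by (simp add: ennreal_plus)
    finally have "1 \<le> K/\<alpha> + (\<alpha>-1)/\<alpha>"
      using a Kpos by (subst (asm) ennreal_le_iff) auto
    then have "1 \<le> K" using a by (simp add: field_simps)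
    then have "0 \<le> (\<alpha>-1)*r" unfolding K_def by simp
    then show ?thesis using a by (simp add: zero_le_mult_iff)
  qed
  have ac: "absolutely_continuous Q P"
    unfolding absolutely_continuous_def
  proof
    fix N assume N: "N \<in> null_sets Q"
    then have NP: "N \<in> sets P" using sPQ by auto
    show "N \<in> null_sets P"
    proof (rule ccontr)
      assume "N \<notin> null_sets P"
      then have p: "measure P N > 0" using NP
        by (metis P.emeasure_eq_measure ennreal_0 measure_nonneg null_setsI order_le_neq_trans)
      define c where "c = (K/\<alpha> + 1) / measure P N"
      have cpos: "c > 0" using p a Kpos unfolding c_def by (intro divide_pos_pos add_pos_pos) auto
      have "(\<integral>\<^sup>+x. ennreal (c * indicator N x) \<partial>P) \<le> ennreal (K / \<alpha>)
           + ennreal ((\<alpha>-1)/\<alpha>) * (\<integral>\<^sup>+x. ennreal ((c * indicator N x) powr (\<alpha>/(\<alpha>-1))) \<partial>Q)"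
      proof -
        have "(\<lambda>x. c * indicator N x :: real) \<in> borel_measurable Q"
          using N by (intro borel_measurable_times borel_measurable_const borel_measurable_indicator) auto
        then show ?thesis using H[of "\<lambda>x. c * indicator N x"] cpos by (simp add: K_def)
      qed
      also have "(\<integral>\<^sup>+x. ennreal ((c * indicator N x) powr (\<alpha>/(\<alpha>-1))) \<partial>Q) = 0"
      proof -
        have "(\<integral>\<^sup>+x. ennreal ((c * indicator N x) powr (\<alpha>/(\<alpha>-1))) \<partial>Q) = (\<integral>\<^sup>+x. 0 \<partial>Q)"
          using AE_not_in[OF N] by (intro nn_integral_cong_AE) (elim eventually_mono, simp)
        then show ?thesis by simp
      qed
      also have "(\<integral>\<^sup>+x. ennreal (c * indicator N x) \<partial>P) = ennreal c * emeasure P N"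
        using NP cpos by (simp add: nn_integral_cmult_indicator ennreal_indicator ennreal_mult)
      also have "emeasure P N = ennreal (measure P N)" by (simp add: P.emeasure_eq_measure)
      finally have "ennreal (c * measure P N) \<le> ennreal (K/\<alpha>)"
        using cpos by (simp add: ennreal_mult)
      then have "c * measure P N \<le> K/\<alpha>" using a Kpos by (subst (asm) ennreal_le_iff) auto
      then show False using p by (simp add: c_def)
    qed
  qed
  define \<rho> where "\<rho> x = enn2real (RN_deriv Q P x)" for x
  have fin: "AE x in Q. RN_deriv Q P x \<noteq> \<infinity>"
    using ac sPQ by (intro Q.RN_deriv_finite) (auto intro: P.sigma_finite_measure)
  have \<rho>m[measurable]: "\<rho> \<in> borel_measurable Q" unfolding \<rho>_def by simp
  define m where "m n x = min (\<rho> x) (real n)" for n x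
  have m0: "0 \<le> m n x" for n x by (simp add: m_def \<rho>_def)
  define E where "E n = (\<integral>\<^sup>+x. ennreal (m n x powr \<alpha>) \<partial>Q)" for n
  have EK: "E n \<le> ennreal K" for n
  proof -
    have Efin: "E n \<le> ennreal (real n powr \<alpha>)"
    proof -
      have "E n \<le> (\<integral>\<^sup>+x. ennreal (real n powr \<alpha>) \<partial>Q)"
        unfolding E_def using m0 a
        by (intro nn_integral_mono ennreal_leI powr_mono2) (auto simp: m_def)
      then show ?thesis by (simp add: Q.emeasure_space_1)
    qed
    then obtain e where e: "E n = ennreal e" "0 \<le> e"
      by (metis ennreal_cases ennreal_less_top neq_top_trans top.not_eq_extremum)
    have "E n \<le> (\<integral>\<^sup>+x. ennreal (m n x powr (\<alpha>-1)) \<partial>P)"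
    proof -
      have "(\<integral>\<^sup>+x. ennreal (m n x powr (\<alpha>-1)) \<partial>P) = (\<integral>\<^sup>+x. RN_deriv Q P x * ennreal (m n x powr (\<alpha>-1)) \<partial>Q)"
        using ac sPQ by (intro Q.RN_deriv_nn_integral) (auto simp: m_def)
      also have "\<dots> = (\<integral>\<^sup>+x. ennreal (\<rho> x * m n x powr (\<alpha>-1)) \<partial>Q)"
        using fin by (intro nn_integral_cong_AE) (auto simp: \<rho>_def ennreal_mult' less_top)
      also have "E n \<le> \<dots>"
        unfolding E_def
      proof (intro nn_integral_mono ennreal_leI)
        fix x
        have "m n x powr \<alpha> = m n x * m n x powr (\<alpha>-1)"
          using m0[of n x] powr_add[of "m n x" 1 "\<alpha>-1"] by (cases "m n x = 0") auto
        also have "\<dots> \<le> \<rho> x * m n x powr (\<alpha>-1)"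
          by (intro mult_right_mono) (auto simp: m_def)
        finally show "m n x powr \<alpha> \<le> \<rho> x * m n x powr (\<alpha>-1)" .
      qed
      finally show ?thesis .
    qed
    also have "\<dots> \<le> ennreal (K / \<alpha>)
           + ennreal ((\<alpha>-1)/\<alpha>) * (\<integral>\<^sup>+x. ennreal ((m n x powr (\<alpha>-1)) powr (\<alpha>/(\<alpha>-1))) \<partial>Q)"
      using H[of "\<lambda>x. m n x powr (\<alpha>-1)"] by (simp add: K_def m_def)
    also have "(\<integral>\<^sup>+x. ennreal ((m n x powr (\<alpha>-1)) powr (\<alpha>/(\<alpha>-1))) \<partial>Q) = E n"
      unfolding E_def using a by (simp add: powr_powr)
    finally have "ennreal e \<le> ennreal (K/\<alpha>) + ennreal ((\<alpha>-1)/\<alpha>) * ennreal e" using e by simp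
    also have "\<dots> = ennreal (K/\<alpha> + (\<alpha>-1)/\<alpha> * e)"
      using a e Kpos by (simp add: ennreal_mult'[symmetric] ennreal_plus)
    finally have "e \<le> K/\<alpha> + (\<alpha>-1)/\<alpha> * e"
      using a Kpos e by (subst (asm) ennreal_le_iff) (auto intro!: add_nonneg_nonneg)
    then have "e \<le> K" using a by (simp add: field_simps)
    then show ?thesis using e by (simp add: ennreal_leI)
  qed
  define I where "I = (\<integral>\<^sup>+ x. ennreal ((enn2real (RN_deriv Q P x)) powr \<alpha>) \<partial>Q)"
  have "I = (\<integral>\<^sup>+ x. (SUP n. ennreal (m n x powr \<alpha>)) \<partial>Q)"
    unfolding I_def
  proof (intro nn_integral_cong antisym)
    fix x
    show "ennreal (enn2real (RN_deriv Q P x) powr \<alpha>) \<le> (SUP n. ennreal (m n x powr \<alpha>))"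
    proof -
      have "m (nat \<lceil>\<rho> x\<rceil>) x = \<rho> x" by (simp add: m_def) linarith
      then show ?thesis by (intro SUP_upper2[of "nat \<lceil>\<rho> x\<rceil>"]) (auto simp: \<rho>_def)
    qed
    show "(SUP n. ennreal (m n x powr \<alpha>)) \<le> ennreal (enn2real (RN_deriv Q P x) powr \<alpha>)"
      using a m0 by (intro SUP_least ennreal_leI powr_mono2) (auto simp: m_def \<rho>_def)
  qed
  also have "\<dots> = (SUP n. E n)"
    unfolding E_def
  proof (intro nn_integral_monotone_convergence_SUP)
    show "incseq (\<lambda>n x. ennreal (m n x powr \<alpha>))"
      using a m0 by (auto simp: incseq_def le_fun_def m_def intro!: ennreal_leI powr_mono2)
  qed (auto simp: m_def)
  also have "\<dots> \<le> ennreal K" using EK by (intro SUP_least) auto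
  finally have IK: "I \<le> ennreal K" .
  then have Ifin: "I \<noteq> \<infinity>" by (auto simp: top_unique)
  have "enn2real I \<le> K" using IK Kpos Ifin by (metis enn2real_mono enn2real_ennreal less_imp_le ennreal_less_top)
  have lnle: "ln (enn2real I) / (\<alpha> - 1) \<le> r"
  proof (cases "enn2real I = 0")
    case True then show ?thesis using r0 by simp
  next
    case False
    then have "enn2real I > 0" by (simp add: enn2real_nonneg order_le_neq_trans)
    then have "ln (enn2real I) \<le> ln K" using \<open>enn2real I \<le> K\<close> by simp
    also have "\<dots> = (\<alpha>-1)*r" by (simp add: K_def)
    finally show ?thesis using a by (simp add: divide_le_eq mult.commute)
  qed
  show ?thesis
    unfolding renyi_div_def using sPQ ac Ifin lnle by (simp add: I_def Let_def)
qed

lemma coupling_cdf: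
  assumes \<pi>: "\<pi> \<in> couplings \<nu>i \<nu>j" and c: "(SUP p\<in>msupport \<pi>. ereal \<bar>fst p - snd p\<bar>) < ereal c"
  shows "cdf \<nu>i x \<le> cdf \<nu>j (x + c)" "cdf \<nu>j x \<le> cdf \<nu>i (x + c)"
proof -
  have ps: "prob_space \<pi>" and s: "sets \<pi> = sets (borel :: (real \<times> real) measure)"
    and m1: "distr \<pi> borel fst = \<nu>i" and m2: "distr \<pi> borel snd = \<nu>j"
    using \<pi> by (auto simp: couplings_def)
  interpret prob_space \<pi> by fact
  have AEd: "AE p in \<pi>. \<bar>fst p - snd p\<bar> < c"
    using msupport_AE[OF s]
  proof (elim eventually_mono)
    fix p assume "p \<in> msupport \<pi>"
    then have "ereal \<bar>fst p - snd p\<bar> \<le> (SUP p\<in>msupport \<pi>. ereal \<bar>fst p - snd p\<bar>)"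
      by (rule SUP_upper)
    then have "ereal \<bar>fst p - snd p\<bar> < ereal c" using c by (rule le_less_trans)
    then show "\<bar>fst p - snd p\<bar> < c" by simp
  qed
  have mf: "fst \<in> borel_measurable \<pi>" "snd \<in> borel_measurable \<pi>"
  proof -
    have "fst \<in> borel_measurable (borel :: (real \<times> real) measure)"
         "snd \<in> borel_measurable (borel :: (real \<times> real) measure)"
      unfolding borel_prod[symmetric] by simp_all
    then show "fst \<in> borel_measurable \<pi>" "snd \<in> borel_measurable \<pi>"
      using measurable_cong_sets[OF s refl] by auto
  qed
  have e1: "cdf \<nu>i x = measure \<pi> (fst -` {..x} \<inter> space \<pi>)" for x
    unfolding cdf_def m1[symmetric] by (subst measure_distr) (simp_all add: mf)
  have e2: "cdf \<nu>j x = measure \<pi> (snd -` {..x} \<inter> space \<pi>)" for x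
    unfolding cdf_def m2[symmetric] by (subst measure_distr) (simp_all add: mf)
  have ms1: "fst -` {..x} \<inter> space \<pi> \<in> sets \<pi>" for x
    using mf(1) by (simp add: measurable_sets)
  have ms2: "snd -` {..x} \<inter> space \<pi> \<in> sets \<pi>" for x
    using mf(2) by (simp add: measurable_sets)
  show "cdf \<nu>i x \<le> cdf \<nu>j (x + c)"
    unfolding e1 e2 using AEd ms1 ms2
    by (intro finite_measure_mono_AE) (auto elim!: eventually_mono)
  show "cdf \<nu>j x \<le> cdf \<nu>i (x + c)"
    unfolding e1 e2 using AEd ms1 ms2
    by (intro finite_measure_mono_AE) (auto elim!: eventually_mono)
qed

lemma ereal_le_from_above:
  assumes "\<And>c. W < ereal c \<Longrightarrow> t \<le> c"
  shows "ereal t \<le> W"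
proof (rule ccontr)
  assume "\<not> ereal t \<le> W"
  then have "W < ereal t" by simp
  then obtain z where z: "W < z" "z < ereal t" using dense by blast
  have zf: "\<bar>z\<bar> \<noteq> \<infinity>" using z by auto
  define c where "c = real_of_ereal z"
  have zc: "z = ereal c" using zf unfolding c_def by (rule ereal_real'[symmetric])
  have "t \<le> c" using assms[of c] z zc by simp
  then show False using z zc by simp
qed

lemma quantile_coupling:
  assumes Ri: "real_distribution \<nu>i" and Rj: "real_distribution \<nu>j"
  shows "\<exists>(\<Omega>::real measure) X Y. prob_space \<Omega> \<and> X \<in> borel_measurable \<Omega> \<and> Y \<in> borel_measurable \<Omega>
     \<and> distr \<Omega> borel X = \<nu>i \<and> distr \<Omega> borel Y = \<nu>j
     \<and> (\<forall>\<omega>\<in>space \<Omega>. ereal \<bar>X \<omega> - Y \<omega>\<bar> \<le> W_inf \<nu>i \<nu>j)"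
proof -
  interpret Ci: cdf_distribution \<nu>i unfolding cdf_distribution_def by fact
  interpret Cj: cdf_distribution \<nu>j unfolding cdf_distribution_def by fact
  let ?\<Omega> = "restrict_space lborel {0<..<1::real}"
  define X where "X \<omega> = Inf {x. \<omega> \<le> cdf \<nu>i x}" for \<omega>
  define Y where "Y \<omega> = Inf {x. \<omega> \<le> cdf \<nu>j x}" for \<omega>
  have ps: "prob_space ?\<Omega>"
    by (auto simp add: emeasure_restrict_space space_restrict_space intro!: prob_spaceI)
  have ss: "sets ?\<Omega> = sets (restrict_space borel {0<..<1::real})"
    by (simp add: sets_restrict_space)
  have mX: "X \<in> borel_measurable ?\<Omega>"
    using Ci.measurable_CI unfolding X_def measurable_cong_sets[OF ss refl] .
  have mY: "Y \<in> borel_measurable ?\<Omega>"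
    using Cj.measurable_CI unfolding Y_def measurable_cong_sets[OF ss refl] .
  have dX: "distr ?\<Omega> borel X = \<nu>i" unfolding X_def by (rule Ci.distr_I_eq_M)
  have dY: "distr ?\<Omega> borel Y = \<nu>j" unfolding Y_def by (rule Cj.distr_I_eq_M)
  have close: "ereal \<bar>X \<omega> - Y \<omega>\<bar> \<le> W_inf \<nu>i \<nu>j" if \<omega>: "0 < \<omega>" "\<omega> < 1" for \<omega>
  proof (rule ereal_le_from_above)
    fix c assume "W_inf \<nu>i \<nu>j < ereal c"
    then obtain \<pi> where \<pi>: "\<pi> \<in> couplings \<nu>i \<nu>j"
      and lt: "(SUP p\<in>msupport \<pi>. ereal \<bar>fst p - snd p\<bar>) < ereal c"
      unfolding W_inf_def INF_less_iff by blast
    have pi: "\<omega> \<le> cdf \<nu>i x \<longleftrightarrow> X \<omega> \<le> x" for x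
      using Ci.pseudoinverse[OF \<omega>, of x] unfolding X_def .
    have pj: "\<omega> \<le> cdf \<nu>j x \<longleftrightarrow> Y \<omega> \<le> x" for x
      using Cj.pseudoinverse[OF \<omega>, of x] unfolding Y_def .
    have "\<omega> \<le> cdf \<nu>i (X \<omega>)" using pi[of "X \<omega>"] by blast
    also have "\<dots> \<le> cdf \<nu>j (X \<omega> + c)" by (rule coupling_cdf(1)[OF \<pi> lt])
    finally have 1: "Y \<omega> \<le> X \<omega> + c" using pj by blast
    have "\<omega> \<le> cdf \<nu>j (Y \<omega>)" using pj[of "Y \<omega>"] by blast
    also have "\<dots> \<le> cdf \<nu>i (Y \<omega> + c)" by (rule coupling_cdf(2)[OF \<pi> lt])
    finally have 2: "X \<omega> \<le> Y \<omega> + c" using pi by blast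
    show "\<bar>X \<omega> - Y \<omega>\<bar> \<le> c" using 1 2 by linarith
  qed
  have "\<forall>\<omega>\<in>space ?\<Omega>. ereal \<bar>X \<omega> - Y \<omega>\<bar> \<le> W_inf \<nu>i \<nu>j"
    using close by (simp add: space_restrict_space)
  then show ?thesis
    using ps mX mY dX dY by blast
qed

lemma slice_mech_integral:
  fixes \<theta> :: "('s \<times> 'x) measure" and f :: "'x \<Rightarrow> 'a::euclidean_space" and u :: 'a
  assumes th: "prob_space \<theta>" and s\<theta>: "sets \<theta> = sets (count_space UNIV \<Otimes>\<^sub>M SX)"
    and f[measurable]: "f \<in> SX \<rightarrow>\<^sub>M borel"
    and z: "prob_space \<zeta>" and sz: "sets \<zeta> = sets borel"
    and pos: "secret_prob \<theta> SX s > 0"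
  shows "real_distribution (slice u (cond_query_law \<theta> SX f s))"
    and "prob_space (slice u (mech_law \<theta> SX f \<zeta> s))"
    and "sets (slice u (mech_law \<theta> SX f \<zeta> s)) = sets borel"
    and "\<And>h. h \<in> borel_measurable borel \<Longrightarrow>
      (\<integral>\<^sup>+x. ennreal (h x) \<partial>slice u (mech_law \<theta> SX f \<zeta> s))
      = (\<integral>\<^sup>+x. (\<integral>\<^sup>+n. ennreal (h (x + n \<bullet> u)) \<partial>\<zeta>) \<partial>slice u (cond_query_law \<theta> SX f s))"
proof -
  interpret T: prob_space \<theta> by fact
  interpret Z: prob_space \<zeta> by fact
  define A where "A = {s} \<times> space SX"
  have A: "A \<in> sets \<theta>" unfolding A_def s\<theta> by (intro pair_measureI) auto
  have eA: "emeasure \<theta> A = ennreal (secret_prob \<theta> SX s)"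
    by (simp add: secret_prob_def A_def[symmetric] T.emeasure_eq_measure)
  define Us where "Us = uniform_measure \<theta> A"
  have Usp: "prob_space Us" unfolding Us_def
    using A eA pos by (intro prob_space_uniform_measure) auto
  interpret US: prob_space Us by fact
  have sUs: "sets Us = sets (count_space UNIV \<Otimes>\<^sub>M SX)" unfolding Us_def by (simp add: s\<theta>)
  have msnd[measurable]: "snd \<in> Us \<rightarrow>\<^sub>M SX"
    using measurable_snd[of "count_space UNIV" SX] unfolding measurable_cong_sets[OF sUs refl] .
  have mid[measurable]: "(\<lambda>x. x) \<in> \<zeta> \<rightarrow>\<^sub>M borel" using sz by (rule measurable_ident_sets)
  have mT[measurable]: "(\<lambda>(p, n). f (snd p) + n) \<in> Us \<Otimes>\<^sub>M \<zeta> \<rightarrow>\<^sub>M borel"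
    by measurable
  have mF[measurable]: "(\<lambda>p. f (snd p)) \<in> Us \<rightarrow>\<^sub>M borel" by measurable
  have mu[measurable]: "(\<lambda>a::'a. a \<bullet> u) \<in> borel \<rightarrow>\<^sub>M borel" by simp
  have cq: "slice u (cond_query_law \<theta> SX f s) = distr Us borel (\<lambda>p. f (snd p) \<bullet> u)"
    unfolding slice_def cond_query_law_def Us_def[symmetric] A_def[symmetric]
    by (subst distr_distr) (auto simp: comp_def)
  have ml: "slice u (mech_law \<theta> SX f \<zeta> s) = distr (Us \<Otimes>\<^sub>M \<zeta>) borel (\<lambda>q. f (snd (fst q)) \<bullet> u + snd q \<bullet> u)"
    unfolding slice_def mech_law_def Us_def[symmetric] A_def[symmetric]
    by (subst distr_distr) (auto simp: comp_def case_prod_beta inner_add_left)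
  show "real_distribution (slice u (cond_query_law \<theta> SX f s))"
    unfolding cq real_distribution_def real_distribution_axioms_def by (auto intro!: US.prob_space_distr)
  interpret PZ: pair_prob_space Us \<zeta> by unfold_locales
  show "prob_space (slice u (mech_law \<theta> SX f \<zeta> s))"
    unfolding ml by (auto intro!: PZ.prob_space_distr)
  show "sets (slice u (mech_law \<theta> SX f \<zeta> s)) = sets borel"
    unfolding ml by simp
  fix h :: "real \<Rightarrow> real" assume h[measurable]: "h \<in> borel_measurable borel"
  have "(\<integral>\<^sup>+x. ennreal (h x) \<partial>slice u (mech_law \<theta> SX f \<zeta> s))
     = (\<integral>\<^sup>+q. ennreal (h (f (snd (fst q)) \<bullet> u + snd q \<bullet> u)) \<partial>(Us \<Otimes>\<^sub>M \<zeta>))"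
    unfolding ml by (subst nn_integral_distr) auto
  also have "\<dots> = (\<integral>\<^sup>+p. (\<integral>\<^sup>+n. ennreal (h (f (snd p) \<bullet> u + n \<bullet> u)) \<partial>\<zeta>) \<partial>Us)"
    by (subst Z.nn_integral_fst[symmetric]) (auto simp: case_prod_beta)
  also have "\<dots> = (\<integral>\<^sup>+x. (\<integral>\<^sup>+n. ennreal (h (x + n \<bullet> u)) \<partial>\<zeta>) \<partial>slice u (cond_query_law \<theta> SX f s))"
    unfolding cq by (subst nn_integral_distr) auto
  finally show "(\<integral>\<^sup>+x. ennreal (h x) \<partial>slice u (mech_law \<theta> SX f \<zeta> s))
      = (\<integral>\<^sup>+x. (\<integral>\<^sup>+n. ennreal (h (x + n \<bullet> u)) \<partial>\<zeta>) \<partial>slice u (cond_query_law \<theta> SX f s))" .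
qed

lemma renyi_div_not_minf: "renyi_div \<alpha> P Q \<noteq> -\<infinity>"
  unfolding renyi_div_def Let_def by auto

theorem lemma1:
  fixes SX :: "'x measure" and Sset :: "'s set" and Q :: "('s \<times> 's) set"
    and \<Theta> :: "('s \<times> 'x) measure set"
    and U :: "'a::euclidean_space set" and \<omega> :: "'a measure"
    and f :: "'x \<Rightarrow> 'a" and \<zeta> :: "'a measure"
    and \<theta> :: "('s \<times> 'x) measure" and si sj :: 's and \<alpha> :: real and u :: 'a
  assumes "pufferfish_scenario SX Sset Q \<Theta>"
    and "slice_profile U \<omega>"
    and "f \<in> SX \<rightarrow>\<^sub>M borel"
    and "prob_space \<zeta>" and "sets \<zeta> = sets borel"
    and "\<theta> \<in> \<Theta>" and "(si, sj) \<in> Q"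
    and "secret_prob \<theta> SX si > 0" and "secret_prob \<theta> SX sj > 0"
    and "\<alpha> > 1" and "u \<in> U"
  shows "renyi_div \<alpha> (slice u (mech_law \<theta> SX f \<zeta> si)) (slice u (mech_law \<theta> SX f \<zeta> sj))
         \<le> renyi_env \<alpha> \<zeta> (W_inf (slice u (cond_query_law \<theta> SX f si))
                                  (slice u (cond_query_law \<theta> SX f sj)))"
proof -
  note f = assms(3) and z = assms(4) and sz = assms(5) and a = assms(10)
  have th: "prob_space \<theta>" and s\<theta>: "sets \<theta> = sets (count_space UNIV \<Otimes>\<^sub>M SX)"
    using assms(1,6) by (auto simp: pufferfish_scenario_def)
  have nu: "norm u = 1" using assms(2,11) by (auto simp: slice_profile_def)
  interpret Z: prob_space \<zeta> by fact
  note Ei = slice_mech_integral[OF th s\<theta> f z sz assms(8), where u=u]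
  note Ej = slice_mech_integral[OF th s\<theta> f z sz assms(9), where u=u]
  define \<nu>i where "\<nu>i = slice u (cond_query_law \<theta> SX f si)"
  define \<nu>j where "\<nu>j = slice u (cond_query_law \<theta> SX f sj)"
  define LP where "LP = slice u (mech_law \<theta> SX f \<zeta> si)"
  define LQ where "LQ = slice u (mech_law \<theta> SX f \<zeta> sj)"
  define W where "W = W_inf \<nu>i \<nu>j"
  obtain \<Omega> :: "real measure" and X Y where \<Omega>: "prob_space \<Omega>"
    and mX[measurable]: "X \<in> borel_measurable \<Omega>" and mY[measurable]: "Y \<in> borel_measurable \<Omega>"
    and dX: "distr \<Omega> borel X = \<nu>i" and dY: "distr \<Omega> borel Y = \<nu>j"
    and XY: "\<And>w. w \<in> space \<Omega> \<Longrightarrow> ereal \<bar>X w - Y w\<bar> \<le> W"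
    using quantile_coupling[OF Ei(1) Ej(1)] unfolding W_def \<nu>i_def \<nu>j_def by blast
  interpret O: prob_space \<Omega> by fact
  have W0: "ereal 0 \<le> W"
  proof -
    obtain w where "w \<in> space \<Omega>" using O.not_empty by blast
    from XY[OF this] show ?thesis by (rule order_trans[rotated]) simp
  qed
  define R where "R = renyi_env \<alpha> \<zeta> W"
  have Rge: "renyi_div \<alpha> (shift_meas \<zeta> b) \<zeta> \<le> R" if "ereal (norm b) \<le> W" for b
    unfolding R_def renyi_env_def using that by (intro SUP_upper) auto
  show ?thesis
  proof (cases "R = \<infinity>")
    case True then show ?thesis by (simp add: R_def W_def \<nu>i_def \<nu>j_def)
  next
    case False
    have "R \<noteq> -\<infinity>" using Rge[of 0] W0 renyi_div_not_minf[of \<alpha> "shift_meas \<zeta> 0" \<zeta>]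
      by auto
    with False obtain r where Rr: "R = ereal r" by (cases R) auto
    define K where "K = exp ((\<alpha>-1)*r)"
    define c where "c = ennreal ((\<alpha>-1)/\<alpha>)"
    have "renyi_div \<alpha> LP LQ \<le> ereal r"
    proof (rule young_to_renyi)
      show "prob_space LP" unfolding LP_def by (rule Ei(2))
      show "prob_space LQ" unfolding LQ_def by (rule Ej(2))
      show "sets LP = sets LQ" unfolding LP_def LQ_def Ei(3) Ej(3) ..
      show "1 < \<alpha>" by fact
      fix g :: "real \<Rightarrow> real" assume gm: "g \<in> borel_measurable LQ" and g0: "\<And>x. 0 \<le> g x"
      have g[measurable]: "g \<in> borel_measurable borel"
        using gm unfolding measurable_cong_sets[OF Ej(3)[folded LQ_def] refl] .
      have gb[measurable]: "(\<lambda>x. g x powr (\<alpha>/(\<alpha>-1))) \<in> borel_measurable borel" by measurable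
      have mid[measurable]: "(\<lambda>x. x) \<in> \<zeta> \<rightarrow>\<^sub>M borel" using sz by (rule measurable_ident_sets)
      define \<phi> where "\<phi> x = (\<integral>\<^sup>+n. ennreal (g (x + n \<bullet> u)) \<partial>\<zeta>)" for x
      define \<psi> where "\<psi> x = (\<integral>\<^sup>+n. ennreal (g (x + n \<bullet> u) powr (\<alpha>/(\<alpha>-1))) \<partial>\<zeta>)" for x
      have m\<phi>[measurable]: "\<phi> \<in> borel_measurable borel" unfolding \<phi>_def
        by (intro Z.borel_measurable_nn_integral) measurable
      have m\<psi>[measurable]: "\<psi> \<in> borel_measurable borel" unfolding \<psi>_def
        by (intro Z.borel_measurable_nn_integral) measurable
      have pw: "\<phi> (X w) \<le> ennreal (K/\<alpha>) + c * \<psi> (Y w)" if w: "w \<in> space \<Omega>" for w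
      proof -
        define b where "b = (Y w - X w) *\<^sub>R u"
        have nb: "norm b = \<bar>X w - Y w\<bar>" unfolding b_def using nu by simp
        have D: "renyi_div \<alpha> (shift_meas \<zeta> b) \<zeta> \<le> ereal r"
          using Rge[of b] XY[OF w] nb Rr by simp
        have ms[measurable]: "(\<lambda>x. x - b) \<in> \<zeta> \<rightarrow>\<^sub>M borel" by measurable
        have psh: "prob_space (shift_meas \<zeta> b)"
          unfolding shift_meas_def by (rule Z.prob_space_distr) measurable
        define G where "G z = g (z \<bullet> u + Y w)" for z
        have mG: "G \<in> borel_measurable \<zeta>" unfolding G_def by measurable
        have "(\<integral>\<^sup>+x. ennreal (G x) \<partial>shift_meas \<zeta> b) \<le> ennreal (exp ((\<alpha>-1)*r) / \<alpha>)
           + ennreal ((\<alpha>-1)/\<alpha>) * (\<integral>\<^sup>+x. ennreal (G x powr (\<alpha>/(\<alpha>-1))) \<partial>\<zeta>)"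
          by (rule renyi_to_young[OF psh z a D mG]) (simp add: G_def g0)
        moreover have "(\<integral>\<^sup>+x. ennreal (G x) \<partial>shift_meas \<zeta> b) = \<phi> (X w)"
        proof -
          have "(\<integral>\<^sup>+x. ennreal (G x) \<partial>shift_meas \<zeta> b) = (\<integral>\<^sup>+n. ennreal (G (n - b)) \<partial>\<zeta>)"
            unfolding shift_meas_def using mG by (subst nn_integral_distr) (auto simp: measurable_cong_sets[OF sz refl])
          also have "\<dots> = \<phi> (X w)"
          proof -
            have "u \<bullet> u = 1" using nu by (simp add: dot_square_norm)
            then have "(n - b) \<bullet> u + Y w = X w + n \<bullet> u" for n
              unfolding b_def by (simp add: inner_diff_left algebra_simps)
            then show ?thesis unfolding \<phi>_def G_def by simp
          qed
          finally show ?thesis .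
        qed
        moreover have "(\<integral>\<^sup>+x. ennreal (G x powr (\<alpha>/(\<alpha>-1))) \<partial>\<zeta>) = \<psi> (Y w)"
          unfolding \<psi>_def G_def by (simp add: add.commute)
        ultimately show ?thesis by (simp add: K_def c_def)
      qed
      have "(\<integral>\<^sup>+x. ennreal (g x) \<partial>LP) = (\<integral>\<^sup>+x. \<phi> x \<partial>\<nu>i)"
        unfolding LP_def \<nu>i_def \<phi>_def by (rule Ei(4)) fact
      also have "\<dots> = (\<integral>\<^sup>+w. \<phi> (X w) \<partial>\<Omega>)"
        unfolding dX[symmetric] by (subst nn_integral_distr) auto
      also have "\<dots> \<le> (\<integral>\<^sup>+w. ennreal (K/\<alpha>) + c * \<psi> (Y w) \<partial>\<Omega>)"
        by (intro nn_integral_mono pw)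
      also have "\<dots> = ennreal (K/\<alpha>) + c * (\<integral>\<^sup>+w. \<psi> (Y w) \<partial>\<Omega>)"
        by (simp add: nn_integral_add nn_integral_cmult O.emeasure_space_1)
      also have "(\<integral>\<^sup>+w. \<psi> (Y w) \<partial>\<Omega>) = (\<integral>\<^sup>+x. \<psi> x \<partial>\<nu>j)"
        unfolding dY[symmetric] by (subst nn_integral_distr) auto
      also have "\<dots> = (\<integral>\<^sup>+x. ennreal (g x powr (\<alpha>/(\<alpha>-1))) \<partial>LQ)"
        unfolding LQ_def \<nu>j_def \<psi>_def by (rule Ej(4)[symmetric]) fact
      finally show "(\<integral>\<^sup>+x. ennreal (g x) \<partial>LP) \<le> ennreal (exp ((\<alpha>-1)*r) / \<alpha>)
           + ennreal ((\<alpha>-1)/\<alpha>) * (\<integral>\<^sup>+x. ennreal (g x powr (\<alpha>/(\<alpha>-1))) \<partial>LQ)"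
        by (simp add: K_def c_def)
    qed
    then show ?thesis using Rr by (simp add: R_def W_def \<nu>i_def \<nu>j_def LP_def LQ_def)
  qed
qed

end
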